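(* For each $c\in[0,1]$, the following decision rule is a Bayes decision rule: \[ \delta^{**}_c(\mathbf{y},u)=\begin{cases}1 & \text{if } \sum_{i=1}^{n} w_i^{**} y_i > C^{**},\\ 0 & \text{if } \sum_{i=1}^{n} w_i^{**} y_i < C^{**},\\ u & \text{otherwise},\end{cases} \] where $w_i^{**}=2\log\!\left(\frac{\alpha_i}{\beta_i}\right)$ and $C^{**}=\log\!\left(\frac{1-c}{c}\right)+\sum_{i=1}^{n}\frac{w_i^{**}}{2}$.
   Context: The setting is a crowdsourcing problem with unknown expert accuracies. The unknown quantity is $\theta\in\{0,1\}$, and the observations are expert opinions $\mathbf{Y}=(Y_1,\ldots,Y_n)\in\{0,1\}^n$ together with a fair coin flip $U\sim\text{Bernoulli}(1/2)$ that is independent of $\mathbf{Y}$. The following assumptions hold: - $Y_1,\ldots,Y_n$ are independent conditionally on $(\theta,\gamma_1,\ldots,\gamma_n)$. - $P(Y_i=1\mid\theta=1,\gamma_i)=P(Y_i=0\mid\theta=0,\gamma_i)=\gamma_i$. - $n$ is odd. - The parameter space is $\{(\theta,\gamma_1,\ldots,\gamma_n):\theta\in\{0,1\},\ \gamma_i\in[0,1]\}$. The prior has the following form: - $\theta,\gamma_1,\ldots,\gamma_n$ are independent. - $P(\theta=1)=c$. - $\gamma_i\sim\text{Beta}(\alpha_i,\beta_i)$, with hyperparameters $\alpha_i,\beta_i$ fixed a priori. The loss is $L(\theta,a)=\mathbb{I}(\theta\neq a)$ for $a\in\{0,1\}$. A Bayes decision rule minimizes the expected risk under the prior. *)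

theory Defs
  imports "HOL-Probability.Probability"
begin

definition beta_density :: "real \<Rightarrow> real \<Rightarrow> real \<Rightarrow> real" where
  "beta_density a b x =
     (if 0 < x \<and> x < 1 then x powr (a - 1) * (1 - x) powr (b - 1) / Beta a b else 0)"

definition beta_measure :: "real \<Rightarrow> real \<Rightarrow> real measure" where
  "beta_measure a b = density lborel (\<lambda>x. ennreal (beta_density a b x))"

text \<open>Observation space: expert opinions y in {0,1}^n (True = 1), as extensional functions on {..<n}.\<close>
definition obs_space :: "nat \<Rightarrow> (nat \<Rightarrow> bool) set" where
  "obs_space n = PiE {..<n} (\<lambda>_. UNIV)"

definition lik :: "nat \<Rightarrow> bool \<Rightarrow> (nat \<Rightarrow> real) \<Rightarrow> (nat \<Rightarrow> bool) \<Rightarrow> real" where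
  "lik n \<theta> \<gamma> y = (\<Prod>i<n. if y i = \<theta> then \<gamma> i else 1 - \<gamma> i)"

text \<open>Frequentist risk of a decision rule delta(y,u) under 0-1 loss, with U ~ Bernoulli(1/2)
  independent of Y.\<close>
definition risk :: "nat \<Rightarrow> ((nat \<Rightarrow> bool) \<Rightarrow> bool \<Rightarrow> bool) \<Rightarrow> bool \<Rightarrow> (nat \<Rightarrow> real) \<Rightarrow> real" where
  "risk n \<delta> \<theta> \<gamma> =
     (\<Sum>y\<in>obs_space n. \<Sum>u\<in>(UNIV::bool set).
        (1/2) * lik n \<theta> \<gamma> y * (if \<theta> \<noteq> \<delta> y u then 1 else 0))"

definition gamma_prior :: "nat \<Rightarrow> (nat \<Rightarrow> real) \<Rightarrow> (nat \<Rightarrow> real) \<Rightarrow> (nat \<Rightarrow> real) measure" where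
  "gamma_prior n \<alpha> \<beta> = PiM {..<n} (\<lambda>i. beta_measure (\<alpha> i) (\<beta> i))"

definition bayes_risk ::
  "nat \<Rightarrow> (nat \<Rightarrow> real) \<Rightarrow> (nat \<Rightarrow> real) \<Rightarrow> real \<Rightarrow> ((nat \<Rightarrow> bool) \<Rightarrow> bool \<Rightarrow> bool) \<Rightarrow> real" where
  "bayes_risk n \<alpha> \<beta> c \<delta> =
     c * (\<integral>\<gamma>. risk n \<delta> True \<gamma> \<partial>gamma_prior n \<alpha> \<beta>)
     + (1 - c) * (\<integral>\<gamma>. risk n \<delta> False \<gamma> \<partial>gamma_prior n \<alpha> \<beta>)"

definition is_bayes_rule ::
  "nat \<Rightarrow> (nat \<Rightarrow> real) \<Rightarrow> (nat \<Rightarrow> real) \<Rightarrow> real \<Rightarrow> ((nat \<Rightarrow> bool) \<Rightarrow> bool \<Rightarrow> bool) \<Rightarrow> bool" where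
  "is_bayes_rule n \<alpha> \<beta> c \<delta> \<longleftrightarrow>
     (\<forall>\<delta>'. bayes_risk n \<alpha> \<beta> c \<delta> \<le> bayes_risk n \<alpha> \<beta> c \<delta>')"

definition w_ss :: "(nat \<Rightarrow> real) \<Rightarrow> (nat \<Rightarrow> real) \<Rightarrow> nat \<Rightarrow> real" where
  "w_ss \<alpha> \<beta> i = 2 * ln (\<alpha> i / \<beta> i)"

text \<open>Threshold C = log((1-c)/c) + sum_i w_i/2, as an extended real:
  log((1-0)/0) = +infinity and log(0/1) = -infinity at the endpoints c = 0, 1.\<close>
definition C_ss :: "nat \<Rightarrow> (nat \<Rightarrow> real) \<Rightarrow> (nat \<Rightarrow> real) \<Rightarrow> real \<Rightarrow> ereal" where
  "C_ss n \<alpha> \<beta> c =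
     (if c = 0 then \<infinity> else if c = 1 then -\<infinity>
      else ereal (ln ((1 - c) / c) + (\<Sum>i<n. w_ss \<alpha> \<beta> i / 2)))"

definition delta_ss ::
  "nat \<Rightarrow> (nat \<Rightarrow> real) \<Rightarrow> (nat \<Rightarrow> real) \<Rightarrow> real \<Rightarrow> (nat \<Rightarrow> bool) \<Rightarrow> bool \<Rightarrow> bool" where
  "delta_ss n \<alpha> \<beta> c y u =
     (let S = ereal (\<Sum>i<n. w_ss \<alpha> \<beta> i * (if y i then 1 else 0)) in
      if S > C_ss n \<alpha> \<beta> c then True
      else if S < C_ss n \<alpha> \<beta> c then False
      else u)"

end

theory Submission imports Defs begin

lemma beta_nn_aux:
  fixes a b :: real
  assumes a: "a > 0" and b: "b > 0"
  shows "(\<integral>\<^sup>+x. ennreal (indicator {0..1} x * (x powr (a - 1) * (1 - x) powr (b - 1))) \<partial>lborel) = ennreal (Beta a b)"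
  using nn_integral_has_integral_lebesgue[OF _ has_integral_Beta_real[OF a b]] by simp

lemma Beta_pos': "a > 0 \<Longrightarrow> b > 0 \<Longrightarrow> Beta a b > (0::real)"
  by (simp add: Beta_def)

lemma beta_moment:
  fixes a b :: real and k l :: nat
  assumes a: "a > 0" and b: "b > 0"
  shows "(\<integral>\<^sup>+x. ennreal (x ^ k * (1 - x) ^ l) \<partial>beta_measure a b) = ennreal (Beta (a + k) (b + l) / Beta a b)"
proof -
  have B: "Beta a b > 0" using a b by (rule Beta_pos')
  have eq: "ennreal (beta_density a b x) * ennreal (x ^ k * (1 - x) ^ l)
      = ennreal (indicator {0..1} x * (x powr (a + k - 1) * (1 - x) powr (b + l - 1)) / Beta a b)" for x
  proof -
    consider "x < 0 \<or> x > 1" | "x = 0" | "x = 1" | "0 < x \<and> x < 1" by linarith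
    then show ?thesis
    proof cases
      case 4
      then have "x powr (a + k - 1) = x powr (a - 1) * x ^ k"
        by (simp add: powr_add powr_realpow [symmetric] powr_diff)
      moreover from 4 have "(1 - x) powr (b + l - 1) = (1 - x) powr (b - 1) * (1 - x) ^ l"
        by (simp add: powr_add powr_realpow [symmetric] powr_diff)
      ultimately show ?thesis using 4 B
        by (simp add: beta_density_def ennreal_mult'[symmetric] indicator_def)
    qed (use a b in \<open>auto simp: beta_density_def indicator_def\<close>)
  qed
  have "(\<integral>\<^sup>+x. ennreal (x ^ k * (1 - x) ^ l) \<partial>beta_measure a b)
     = (\<integral>\<^sup>+x. ennreal (indicator {0..1} x * (x powr (a + k - 1) * (1 - x) powr (b + l - 1)) / Beta a b) \<partial>lborel)"
    unfolding beta_measure_def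
    apply (subst nn_integral_density)
    apply (simp add: beta_density_def)
    apply measurable
    apply (rule nn_integral_cong)
    apply (rule eq)
    done
  also have "\<dots> = (\<integral>\<^sup>+x. ennreal (indicator {0..1} x * (x powr (a + k - 1) * (1 - x) powr (b + l - 1))) * ennreal (1 / Beta a b) \<partial>lborel)"
    using B by (intro nn_integral_cong) (simp add: ennreal_mult'[symmetric])
  also have "\<dots> = ennreal (Beta (a + k) (b + l)) * ennreal (1 / Beta a b)"
    using a b by (subst nn_integral_multc) (auto simp: beta_nn_aux)
  also have "\<dots> = ennreal (Beta (a + k) (b + l) / Beta a b)"
    using B Beta_pos'[of "a + k" "b + l"] a b by (simp add: ennreal_mult'[symmetric])
  finally show ?thesis .
qed

lemma beta_AE:
  "AE x in beta_measure a b. 0 < x \<and> x < 1"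
  unfolding beta_measure_def
  by (subst AE_density) (auto simp: beta_density_def)

lemma beta_measure_sets [simp]: "sets (beta_measure a b) = sets borel"
  by (simp add: beta_measure_def)

lemma beta_measure_space [simp]: "space (beta_measure a b) = UNIV"
  by (simp add: beta_measure_def)

lemma beta_measurable_eq [simp]: "borel_measurable (beta_measure a b) = borel_measurable borel"
  by (rule measurable_cong_sets) simp_all

lemma beta_prob:
  assumes a: "a > 0" and b: "b > (0::real)"
  shows "prob_space (beta_measure a b)"
proof
  have "emeasure (beta_measure a b) (space (beta_measure a b)) = (\<integral>\<^sup>+x. ennreal (x ^ 0 * (1 - x) ^ 0) \<partial>beta_measure a b)"
    by (simp add: nn_integral_const)
  also have "\<dots> = 1" using beta_moment[OF a b, of 0 0] Beta_pos'[OF a b] by simp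
  finally show "emeasure (beta_measure a b) (space (beta_measure a b)) = 1" .
qed

lemma beta_moment_L:
  fixes a b :: real and k l :: nat
  assumes a: "a > 0" and b: "b > 0"
  shows "integrable (beta_measure a b) (\<lambda>x. x ^ k * (1 - x) ^ l)"
    and "(\<integral>x. x ^ k * (1 - x) ^ l \<partial>beta_measure a b) = Beta (a + k) (b + l) / Beta a b"
proof -
  have AE: "AE x in beta_measure a b. 0 \<le> x ^ k * (1 - x) ^ l"
    using beta_AE by eventually_elim auto
  have pos: "Beta (a + k) (b + l) / Beta a b \<ge> 0"
    using Beta_pos'[OF a b] Beta_pos'[of "a + k" "b + l"] a b by simp
  show "integrable (beta_measure a b) (\<lambda>x. x ^ k * (1 - x) ^ l)"
    by (rule integrableI_nonneg) (use AE beta_moment[OF a b] in auto)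
  show "(\<integral>x. x ^ k * (1 - x) ^ l \<partial>beta_measure a b) = Beta (a + k) (b + l) / Beta a b"
    by (subst integral_eq_nn_integral) (use AE beta_moment[OF a b] pos in auto)
qed

lemma beta_mean:
  assumes a: "a > 0" and b: "b > (0::real)"
  shows "integrable (beta_measure a b) (\<lambda>x. x)" "(\<integral>x. x \<partial>beta_measure a b) = a / (a + b)"
    "integrable (beta_measure a b) (\<lambda>x. 1 - x)" "(\<integral>x. 1 - x \<partial>beta_measure a b) = b / (a + b)"
proof -
  have B: "Beta a b > 0" using a b by (rule Beta_pos')
  have n1: "a \<notin> \<int>\<^sub>\<le>\<^sub>0" "b \<notin> \<int>\<^sub>\<le>\<^sub>0" using a b by (auto elim!: nonpos_Ints_cases)
  show "integrable (beta_measure a b) (\<lambda>x. x)" using beta_moment_L(1)[OF a b, of 1 0] by simp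
  show "integrable (beta_measure a b) (\<lambda>x. 1 - x)" using beta_moment_L(1)[OF a b, of 0 1] by simp
  have "(\<integral>x. x \<partial>beta_measure a b) = Beta (a + 1) b / Beta a b" using beta_moment_L(2)[OF a b, of 1 0] by simp
  also have "\<dots> = a / (a + b)" using Beta_plus1_left[OF n1(1), of b] B a b
    by (simp add: field_simps)
  finally show "(\<integral>x. x \<partial>beta_measure a b) = a / (a + b)" .
  have "(\<integral>x. 1 - x \<partial>beta_measure a b) = Beta a (b + 1) / Beta a b" using beta_moment_L(2)[OF a b, of 0 1] by simp
  also have "\<dots> = b / (a + b)" using Beta_plus1_right[OF n1(2), of a] B a b
    by (simp add: field_simps)
  finally show "(\<integral>x. 1 - x \<partial>beta_measure a b) = b / (a + b)" .
qed

lemma marginal: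
  fixes n :: nat and \<alpha> \<beta> :: "nat \<Rightarrow> real"
  assumes a: "\<And>i. i < n \<Longrightarrow> \<alpha> i > 0" and b: "\<And>i. i < n \<Longrightarrow> \<beta> i > 0"
  shows "integrable (gamma_prior n \<alpha> \<beta>) (\<lambda>\<gamma>. lik n \<theta> \<gamma> y)"
    "(\<integral>\<gamma>. lik n \<theta> \<gamma> y \<partial>gamma_prior n \<alpha> \<beta>)
       = (\<Prod>i<n. if y i = \<theta> then \<alpha> i / (\<alpha> i + \<beta> i) else \<beta> i / (\<alpha> i + \<beta> i))"
proof -
  define M where "M i = (if i < n then beta_measure (\<alpha> i) (\<beta> i) else beta_measure 1 1)" for i
  have P: "prob_space (M i)" for i
  proof (cases "i < n")
    case True
    then have "\<alpha> i > 0" "\<beta> i > 0" using a b by auto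
    then show ?thesis using True by (simp add: M_def beta_prob)
  qed (simp add: M_def beta_prob)
  interpret product_sigma_finite M
    unfolding product_sigma_finite_def using P prob_space_imp_sigma_finite by blast
  have G: "gamma_prior n \<alpha> \<beta> = PiM {..<n} M"
    unfolding gamma_prior_def by (rule PiM_cong) (auto simp: M_def)
  define f where "f i x = (if y i = \<theta> then x else 1 - x)" for i and x :: real
  have lik: "lik n \<theta> \<gamma> y = (\<Prod>i\<in>{..<n}. f i (\<gamma> i))" for \<gamma>
    by (simp add: lik_def f_def)
  have I: "integrable (M i) (f i)" if "i \<in> {..<n}" for i
  proof -
    have "\<alpha> i > 0" "\<beta> i > 0" "i < n" using that a b by auto
    then show ?thesis by (cases "y i = \<theta>") (simp_all add: M_def f_def[abs_def] beta_mean)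
  qed
  show "integrable (gamma_prior n \<alpha> \<beta>) (\<lambda>\<gamma>. lik n \<theta> \<gamma> y)"
    unfolding G lik by (rule product_integrable_prod) (auto intro: I)
  have "(\<integral>\<gamma>. lik n \<theta> \<gamma> y \<partial>gamma_prior n \<alpha> \<beta>) = (\<Prod>i\<in>{..<n}. integral\<^sup>L (M i) (f i))"
    unfolding G lik by (rule product_integral_prod) (auto intro: I)
  also have "\<dots> = (\<Prod>i<n. if y i = \<theta> then \<alpha> i / (\<alpha> i + \<beta> i) else \<beta> i / (\<alpha> i + \<beta> i))"
    by (rule prod.cong) (auto simp: M_def f_def[abs_def] beta_mean(2,4) a b)
  finally show "(\<integral>\<gamma>. lik n \<theta> \<gamma> y \<partial>gamma_prior n \<alpha> \<beta>)
       = (\<Prod>i<n. if y i = \<theta> then \<alpha> i / (\<alpha> i + \<beta> i) else \<beta> i / (\<alpha> i + \<beta> i))" .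
qed

lemma risk_integral:
  fixes n :: nat and \<alpha> \<beta> :: "nat \<Rightarrow> real"
  assumes a: "\<And>i. i < n \<Longrightarrow> \<alpha> i > 0" and b: "\<And>i. i < n \<Longrightarrow> \<beta> i > 0"
  shows "(\<integral>\<gamma>. risk n \<delta> \<theta> \<gamma> \<partial>gamma_prior n \<alpha> \<beta>)
     = (\<Sum>y\<in>obs_space n. \<Sum>u\<in>(UNIV::bool set). (1/2) * (\<integral>\<gamma>. lik n \<theta> \<gamma> y \<partial>gamma_prior n \<alpha> \<beta>) * (if \<theta> \<noteq> \<delta> y u then 1 else 0))"
proof -
  have "has_bochner_integral (gamma_prior n \<alpha> \<beta>) (\<lambda>\<gamma>. risk n \<delta> \<theta> \<gamma>)
     (\<Sum>y\<in>obs_space n. \<Sum>u\<in>(UNIV::bool set). (1/2) * (\<integral>\<gamma>. lik n \<theta> \<gamma> y \<partial>gamma_prior n \<alpha> \<beta>) * (if \<theta> \<noteq> \<delta> y u then 1 else 0))"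
    unfolding risk_def
    apply (rule has_bochner_integral_sum)
    apply (rule has_bochner_integral_sum)
    apply (rule has_bochner_integral_mult_left)
    apply (rule has_bochner_integral_mult_right)
    apply (rule has_bochner_integral_integrable)
    apply (rule marginal(1)[OF a b]; assumption)
    done
  then show ?thesis by (rule has_bochner_integral_integral_eq)
qed


lemma log_ratio:
  fixes n :: nat and \<alpha> \<beta> :: "nat \<Rightarrow> real" and y :: "nat \<Rightarrow> bool"
  assumes a: "\<And>i. i < n \<Longrightarrow> \<alpha> i > 0" and b: "\<And>i. i < n \<Longrightarrow> \<beta> i > 0"
  defines "m \<equiv> \<lambda>\<theta>. (\<Prod>i<n. if y i = \<theta> then \<alpha> i / (\<alpha> i + \<beta> i) else \<beta> i / (\<alpha> i + \<beta> i))"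
  shows "m True > 0" "m False > 0"
    "ln (m True) - ln (m False) = (\<Sum>i<n. w_ss \<alpha> \<beta> i * (if y i then 1 else 0)) - (\<Sum>i<n. w_ss \<alpha> \<beta> i / 2)"
proof -
  have pos: "(if y i = \<theta> then \<alpha> i / (\<alpha> i + \<beta> i) else \<beta> i / (\<alpha> i + \<beta> i)) > 0" if "i < n" for i \<theta>
    using a[OF that] b[OF that] by auto
  have mp: "m \<theta> > 0" for \<theta> unfolding m_def by (rule prod_pos) (use pos in auto)
  then show "m True > 0" "m False > 0" by auto
  have nz: "(if y i = \<theta> then \<alpha> i / (\<alpha> i + \<beta> i) else \<beta> i / (\<alpha> i + \<beta> i)) \<noteq> 0" if "i \<in> {..<n}" for i \<theta>
    using pos[of i \<theta>] that by simp
  have lp: "ln (m \<theta>) = (\<Sum>i<n. ln (if y i = \<theta> then \<alpha> i / (\<alpha> i + \<beta> i) else \<beta> i / (\<alpha> i + \<beta> i)))" for \<theta>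
    unfolding m_def by (rule ln_prod) (simp_all add: nz)
  have "ln (m True) - ln (m False) = (\<Sum>i<n. ln (if y i = True then \<alpha> i / (\<alpha> i + \<beta> i) else \<beta> i / (\<alpha> i + \<beta> i))
       - ln (if y i = False then \<alpha> i / (\<alpha> i + \<beta> i) else \<beta> i / (\<alpha> i + \<beta> i)))"
    unfolding sum_subtractf lp by simp
  also have "\<dots> = (\<Sum>i<n. w_ss \<alpha> \<beta> i * (if y i then 1 else 0) - w_ss \<alpha> \<beta> i / 2)"
  proof (rule sum.cong)
    fix i assume "i \<in> {..<n}"
    then have ai: "\<alpha> i > 0" and bi: "\<beta> i > 0" using a b by auto
    have w: "w_ss \<alpha> \<beta> i = 2 * (ln (\<alpha> i) - ln (\<beta> i))"
      using ai bi by (simp add: w_ss_def ln_div)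
    show "ln (if y i = True then \<alpha> i / (\<alpha> i + \<beta> i) else \<beta> i / (\<alpha> i + \<beta> i))
       - ln (if y i = False then \<alpha> i / (\<alpha> i + \<beta> i) else \<beta> i / (\<alpha> i + \<beta> i))
       = w_ss \<alpha> \<beta> i * (if y i then 1 else 0) - w_ss \<alpha> \<beta> i / 2"
      using ai bi by (cases "y i") (auto simp: w ln_div field_simps)
  qed simp
  also have "\<dots> = (\<Sum>i<n. w_ss \<alpha> \<beta> i * (if y i then 1 else 0)) - (\<Sum>i<n. w_ss \<alpha> \<beta> i / 2)"
    by (simp add: sum_subtractf)
  finally show "ln (m True) - ln (m False) = (\<Sum>i<n. w_ss \<alpha> \<beta> i * (if y i then 1 else 0)) - (\<Sum>i<n. w_ss \<alpha> \<beta> i / 2)" .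
qed


lemma decision:
  fixes n :: nat and \<alpha> \<beta> :: "nat \<Rightarrow> real" and y :: "nat \<Rightarrow> bool"
  assumes a: "\<And>i. i < n \<Longrightarrow> \<alpha> i > 0" and b: "\<And>i. i < n \<Longrightarrow> \<beta> i > 0"
    and c0: "0 \<le> c" and c1: "c \<le> 1"
  defines "m \<equiv> \<lambda>\<theta>. (\<Prod>i<n. if y i = \<theta> then \<alpha> i / (\<alpha> i + \<beta> i) else \<beta> i / (\<alpha> i + \<beta> i))"
  shows "delta_ss n \<alpha> \<beta> c y u \<Longrightarrow> (1 - c) * m False \<le> c * m True"
    and "\<not> delta_ss n \<alpha> \<beta> c y u \<Longrightarrow> c * m True \<le> (1 - c) * m False"
proof -
  note L0 = log_ratio[of n \<alpha> \<beta> y, OF a b]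
  have L: "m True > 0" "m False > 0" "ln (m True) - ln (m False) = (\<Sum>i<n. w_ss \<alpha> \<beta> i * (if y i then 1 else 0)) - (\<Sum>i<n. w_ss \<alpha> \<beta> i / 2)"
    using L0 by (simp_all add: m_def)
  define S where "S = (\<Sum>i<n. w_ss \<alpha> \<beta> i * (if y i then 1 else 0))"
  define H where "H = (\<Sum>i<n. w_ss \<alpha> \<beta> i / 2)"
  have D: "ln (m True) - ln (m False) = S - H" using L(3) by (simp add: S_def H_def)
  have dl: "delta_ss n \<alpha> \<beta> c y u = (if ereal S > C_ss n \<alpha> \<beta> c then True
      else if ereal S < C_ss n \<alpha> \<beta> c then False else u)"
    by (simp add: delta_ss_def S_def Let_def)
  consider "c = 0" | "c = 1" | "0 < c \<and> c < 1" using c0 c1 by linarith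
  then have "(delta_ss n \<alpha> \<beta> c y u \<longrightarrow> (1 - c) * m False \<le> c * m True)
     \<and> (\<not> delta_ss n \<alpha> \<beta> c y u \<longrightarrow> c * m True \<le> (1 - c) * m False)"
  proof cases
    case 1
    then show ?thesis using L(1,2) unfolding dl by (simp add: C_ss_def)
  next
    case 2
    then show ?thesis using L(1,2) unfolding dl by (simp add: C_ss_def)
  next
    case 3
    define K where "K = ln ((1 - c) / c) + H"
    have C: "C_ss n \<alpha> \<beta> c = ereal K" using 3 by (simp add: C_ss_def K_def H_def)
    have K: "K = ln (1 - c) - ln c + H" using 3 by (simp add: K_def ln_div)
    have e1: "S \<ge> K \<longleftrightarrow> (1 - c) * m False \<le> c * m True"
    proof -
      have "S \<ge> K \<longleftrightarrow> ln ((1 - c) * m False) \<le> ln (c * m True)"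
        using 3 L(1,2) D K by (simp add: ln_mult) linarith
      also have "\<dots> \<longleftrightarrow> (1 - c) * m False \<le> c * m True"
        using 3 L(1,2) by (intro ln_le_cancel_iff) auto
      finally show ?thesis .
    qed
    have e2: "S \<le> K \<longleftrightarrow> c * m True \<le> (1 - c) * m False"
    proof -
      have "S \<le> K \<longleftrightarrow> ln (c * m True) \<le> ln ((1 - c) * m False)"
        using 3 L(1,2) D K by (simp add: ln_mult) linarith
      also have "\<dots> \<longleftrightarrow> c * m True \<le> (1 - c) * m False"
        using 3 L(1,2) by (intro ln_le_cancel_iff) auto
      finally show ?thesis .
    qed
    show ?thesis using e1 e2 by (auto simp: dl C)
  qed
  then show "delta_ss n \<alpha> \<beta> c y u \<Longrightarrow> (1 - c) * m False \<le> c * m True"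
    and "\<not> delta_ss n \<alpha> \<beta> c y u \<Longrightarrow> c * m True \<le> (1 - c) * m False" by auto
qed



theorem theorem6:
  fixes n :: nat and \<alpha> \<beta> :: "nat \<Rightarrow> real" and c :: real
  assumes "odd n"
    and "\<And>i. i < n \<Longrightarrow> \<alpha> i > 0"
    and "\<And>i. i < n \<Longrightarrow> \<beta> i > 0"
    and "0 \<le> c" and "c \<le> 1"
  shows "is_bayes_rule n \<alpha> \<beta> c (delta_ss n \<alpha> \<beta> c)"
proof -
  note a = assms(2) and b = assms(3)
  define m where "m \<theta> y = (\<Prod>i<n. if y i = \<theta> then \<alpha> i / (\<alpha> i + \<beta> i) else \<beta> i / (\<alpha> i + \<beta> i))"
    for \<theta> and y :: "nat \<Rightarrow> bool"
  define g where "g y d = c * ((1/2) * m True y * (if True \<noteq> d then 1 else 0))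
     + (1 - c) * ((1/2) * m False y * (if False \<noteq> d then 1 else 0))" for y and d :: bool
  have R: "(\<integral>\<gamma>. risk n \<delta> \<theta> \<gamma> \<partial>gamma_prior n \<alpha> \<beta>)
     = (\<Sum>y\<in>obs_space n. \<Sum>u\<in>(UNIV::bool set). (1/2) * m \<theta> y * (if \<theta> \<noteq> \<delta> y u then 1 else 0))" for \<delta> \<theta>
  proof -
    have ri: "(\<integral>\<gamma>. risk n \<delta> \<theta> \<gamma> \<partial>gamma_prior n \<alpha> \<beta>)
     = (\<Sum>y\<in>obs_space n. \<Sum>u\<in>(UNIV::bool set). (1/2) * (\<integral>\<gamma>. lik n \<theta> \<gamma> y \<partial>gamma_prior n \<alpha> \<beta>) * (if \<theta> \<noteq> \<delta> y u then 1 else 0))"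
      by (rule risk_integral) (simp_all add: a b)
    have mi: "(\<integral>\<gamma>. lik n \<theta> \<gamma> y \<partial>gamma_prior n \<alpha> \<beta>) = m \<theta> y" for y
      unfolding m_def by (rule marginal(2)) (simp_all add: a b)
    show ?thesis unfolding ri mi ..
  qed
  have BR: "bayes_risk n \<alpha> \<beta> c \<delta> = (\<Sum>y\<in>obs_space n. \<Sum>u\<in>(UNIV::bool set). g y (\<delta> y u))" for \<delta>
    unfolding bayes_risk_def R g_def by (simp add: sum_distrib_left sum.distrib)
  have pt: "g y (delta_ss n \<alpha> \<beta> c y u) \<le> g y d" for y u d
  proof (cases "delta_ss n \<alpha> \<beta> c y u")
    case True
    then have "(1 - c) * m False y \<le> c * m True y"
      using decision(1)[of n \<alpha> \<beta> c y u, OF a b assms(4,5)] by (simp add: m_def)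
    then show ?thesis using True by (cases d) (simp_all add: g_def)
  next
    case False
    then have "c * m True y \<le> (1 - c) * m False y"
      using decision(2)[of n \<alpha> \<beta> c y u, OF a b assms(4,5)] by (simp add: m_def)
    then show ?thesis using False by (cases d) (simp_all add: g_def)
  qed
  show ?thesis
    unfolding is_bayes_rule_def BR
    by (intro allI sum_mono pt)
qed

end
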